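(* Let $\mathcal{X}\subset\mathbb{R}$ be closed and $H\ge1$. For any $f_0\in\mathcal{F}^H$ and any $\epsilon>0$ there exist a knot set $\mathcal{T}$ and a local extrema spline $f^{LX}$ defined on $\mathcal{T}$ such that $\|f_0-f^{LX}\|_\infty<\epsilon$, where $\|g\|_\infty=\sup_{x\in\mathcal{X}}|g(x)|$.
   Context: $\mathcal{F}^{H}$ is the set of continuously differentiable functions $f:\mathcal{X}\to\mathbb{R}$ having $H$ or fewer local extrema interior to $\mathcal{X}$. A local extrema spline on a knot set $\mathcal{T}=\{\tau_k\}_{k=1}^K$ ($\tau_1\le\dots\le\tau_K$, including end knots) is a function $f(x)=\sum_{k=0}^{K+j-1}\beta_kB^{\ast}_{(j,k)}(x)$, for some order $j\ge1$, with $\beta_0\in\mathbb{R}$, $\beta_k\ge0$ for $k\ge1$, where $B^{\ast}_{(j,0)}=1$ and $B^{\ast}_{(j,k)}(x)=M\int_{-\infty}^x\{\prod_{h=1}^H(\xi-\alpha_h)\}B_{(j,k)}(\xi)\,d\xi$ for $k\ge1$, with $B_{(j,k)}$ the order-$j$ B-spline basis functions on $\mathcal{T}$, $\alpha_1,\dots,\alpha_H$ distinct real numbers (change points, which may lie outside $\mathcal{X}$), and $M\in\{-1,1\}$ (which may be chosen to be either sign). *)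

theory Defs
  imports "HOL-Analysis.Analysis"
begin

text \<open>Domain X = {a..b} (closed bounded interval). Continuously differentiable on X:
  a derivative exists on X (one-sided at the end points) and is continuous on X.\<close>
definition C1_on :: "real set \<Rightarrow> (real \<Rightarrow> real) \<Rightarrow> bool" where
  "C1_on X f \<longleftrightarrow> (\<exists>f'. (\<forall>x\<in>X. (f has_real_derivative f' x) (at x within X))
                          \<and> continuous_on X f')"

definition local_extremum :: "(real \<Rightarrow> real) \<Rightarrow> real \<Rightarrow> bool" where
  "local_extremum f x \<longleftrightarrow>
     (\<exists>e>0. \<forall>y. \<bar>y - x\<bar> < e \<longrightarrow> f y \<le> f x) \<or>
     (\<exists>e>0. \<forall>y. \<bar>y - x\<bar> < e \<longrightarrow> f x \<le> f y)"

definition FH :: "nat \<Rightarrow> real set \<Rightarrow> (real \<Rightarrow> real) set" where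
  "FH H X = {f. C1_on X f \<and>
     finite {x \<in> interior X. local_extremum f x} \<and>
     card {x \<in> interior X. local_extremum f x} \<le> H}"

text \<open>B-splines via the Cox--de Boor recursion on an (extended) knot sequence t.
  Convention: division by zero gives 0 (Isabelle), matching the usual 0/0 = 0 convention.\<close>
fun bspl :: "(nat \<Rightarrow> real) \<Rightarrow> nat \<Rightarrow> nat \<Rightarrow> real \<Rightarrow> real" where
  "bspl t 0 i x = 0"
| "bspl t (Suc 0) i x = (if t i \<le> x \<and> x < t (Suc i) then 1 else 0)"
| "bspl t (Suc (Suc j)) i x =
     (x - t i) / (t (i + Suc j) - t i) * bspl t (Suc j) i x
   + (t (i + Suc (Suc j)) - x) / (t (i + Suc (Suc j)) - t (Suc i)) * bspl t (Suc j) (Suc i) x"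

text \<open>Clamped extension of the knot list tau = [tau_1,...,tau_K] for order j:
  tau_1 repeated j times at the left, tau_K repeated (indefinitely) at the right.\<close>
definition ext_knots :: "nat \<Rightarrow> real list \<Rightarrow> nat \<Rightarrow> real" where
  "ext_knots j tau i = tau ! min (length tau - 1) (i - (j - 1))"

definition Bsp :: "nat \<Rightarrow> real list \<Rightarrow> nat \<Rightarrow> real \<Rightarrow> real" where
  "Bsp j tau k x = bspl (ext_knots j tau) j (k - 1) x"

definition Bstar :: "nat \<Rightarrow> (nat \<Rightarrow> real) \<Rightarrow> real \<Rightarrow> nat \<Rightarrow> real list \<Rightarrow> nat \<Rightarrow> real \<Rightarrow> real" where
  "Bstar H alpha M j tau k x =
     (if k = 0 then 1
      else M * integral {..x} (\<lambda>\<xi>. (\<Prod>h=1..H. \<xi> - alpha h) * Bsp j tau k \<xi>))"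

definition lx_spline :: "nat \<Rightarrow> real list \<Rightarrow> (real \<Rightarrow> real) \<Rightarrow> bool" where
  "lx_spline H tau f \<longleftrightarrow> sorted tau \<and> length tau \<ge> 2 \<and>
     (\<exists>(j::nat) (beta::nat \<Rightarrow> real) (alpha::nat \<Rightarrow> real) (M::real).
        j \<ge> 1 \<and> (\<forall>k\<ge>1. beta k \<ge> 0) \<and> inj_on alpha {1..H} \<and> M \<in> {-1, 1} \<and>
        f = (\<lambda>x. \<Sum>k=0..length tau + j - 1. beta k * Bstar H alpha M j tau k x))"

end

theory Submission
  imports Defs
begin


lemma noext_inj:
  fixes f :: "real \<Rightarrow> real"
  assumes cont: "continuous_on {x..y} f"
    and noext: "\<And>z. z \<in> {x<..<y} \<Longrightarrow> \<not> local_extremum f z"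
  shows "inj_on f {x..y}"
proof (rule inj_onI, rule ccontr)
  fix u v assume u: "u \<in> {x..y}" and v: "v \<in> {x..y}" and eq: "f u = f v" and ne: "u \<noteq> v"
  have gen: "False" if uv: "u < v" "u \<in> {x..y}" "v \<in> {x..y}" "f u = f v" for u v
  proof -
    have cuv: "continuous_on {u..v} f" using cont uv by (auto intro: continuous_on_subset)
    obtain c where c: "c \<in> {u..v}" "\<forall>z\<in>{u..v}. f z \<le> f c"
      using continuous_attains_sup[OF compact_Icc _ cuv] uv by auto
    obtain d where d: "d \<in> {u..v}" "\<forall>z\<in>{u..v}. f d \<le> f z"
      using continuous_attains_inf[OF compact_Icc _ cuv] uv by auto
    have loc: "local_extremum f w" if w: "w \<in> {u<..<v}" and P: "(\<forall>z\<in>{u..v}. f z \<le> f w) \<or> (\<forall>z\<in>{u..v}. f w \<le> f z)" for w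
    proof -
      define e where "e = min (w - u) (v - w)"
      have e: "e > 0" using w by (auto simp: e_def)
      have sub: "\<And>z. \<bar>z - w\<bar> < e \<Longrightarrow> z \<in> {u..v}"
      proof -
        fix z assume "\<bar>z - w\<bar> < e"
        then have "z - w < e" "w - z < e" by linarith+
        moreover have "e \<le> w - u" "e \<le> v - w" by (auto simp: e_def)
        ultimately show "z \<in> {u..v}" by auto
      qed
      show ?thesis unfolding local_extremum_def
      proof (rule disjE[OF P])
        assume A: "\<forall>z\<in>{u..v}. f z \<le> f w"
        show "(\<exists>e>0. \<forall>y. \<bar>y - w\<bar> < e \<longrightarrow> f y \<le> f w) \<or> (\<exists>e>0. \<forall>y. \<bar>y - w\<bar> < e \<longrightarrow> f w \<le> f y)"
          using A sub e by blast
      next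
        assume A: "\<forall>z\<in>{u..v}. f w \<le> f z"
        show "(\<exists>e>0. \<forall>y. \<bar>y - w\<bar> < e \<longrightarrow> f y \<le> f w) \<or> (\<exists>e>0. \<forall>y. \<bar>y - w\<bar> < e \<longrightarrow> f w \<le> f y)"
          using A sub e by blast
      qed
    qed
    have inner: "{u<..<v} \<subseteq> {x<..<y}" using uv by auto
    show False
    proof (cases "f c > f u")
      case True
      then have "c \<noteq> u" "c \<noteq> v" using uv by auto
      then have "c \<in> {u<..<v}" using c by auto
      moreover have "local_extremum f c" using loc[of c] c calculation by blast
      ultimately show False using noext inner by blast
    next
      case False
      show False
      proof (cases "f d < f u")
        case True
        then have "d \<noteq> u" "d \<noteq> v" using uv by auto
        then have "d \<in> {u<..<v}" using d by auto
        moreover have "local_extremum f d" using loc[of d] d calculation by blast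
        ultimately show False using noext inner by blast
      next
        case False2: False
        have m: "(u+v)/2 \<in> {u<..<v}" using uv by auto
        have all: "f z = f u" if "z \<in> {u..v}" for z
        proof -
          have "f z \<le> f c" "f d \<le> f z" using c d that by auto
          then show ?thesis using False False2 by linarith
        qed
        have "\<forall>z\<in>{u..v}. f z \<le> f ((u+v)/2)"
        proof
          fix z assume "z \<in> {u..v}"
          moreover have "(u+v)/2 \<in> {u..v}" using m by auto
          ultimately show "f z \<le> f ((u+v)/2)" using all[of z] all[of "(u+v)/2"] by linarith
        qed
        then have "local_extremum f ((u+v)/2)" using loc[OF m] by blast
        then show False using m noext inner by blast
      qed
    qed
  qed
  show False
  proof (cases "u < v")
    case True then show ?thesis using gen u v eq by blast
  next
    case False then have "v < u" using ne by auto
    then show ?thesis using gen u v eq by metis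
  qed
qed


lemma noext_mono:
  fixes f :: "real \<Rightarrow> real"
  assumes xy: "x < y" and cont: "continuous_on {x..y} f"
    and noext: "\<And>z. z \<in> {x<..<y} \<Longrightarrow> \<not> local_extremum f z"
  shows "(\<forall>u v. x \<le> u \<and> u < v \<and> v \<le> y \<longrightarrow> f u < f v) \<or>
         (\<forall>u v. x \<le> u \<and> u < v \<and> v \<le> y \<longrightarrow> f v < f u)"
proof -
  have inj: "inj_on f {x..y}" by (rule noext_inj[OF cont noext])
  have key: "\<forall>u v. x \<le> u \<and> u < v \<and> v \<le> y \<longrightarrow> g u < g v"
    if g: "continuous_on {x..y} g" "inj_on g {x..y}" "g x < g y" for g :: "real \<Rightarrow> real"
  proof (intro allI impI)
    fix u v assume uv: "x \<le> u \<and> u < v \<and> v \<le> y"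
    have gv: "g x < g v"
    proof (cases "v = y")
      case True then show ?thesis using g by simp
    next
      case False
      then have "x < v" "v < y" using uv by auto
      then show ?thesis using continuous_inj_imp_mono[OF _ _ g(1) g(2)] g(3) by force
    qed
    show "g u < g v"
    proof (cases "u = x")
      case True then show ?thesis using gv by simp
    next
      case False
      then have xu: "x < u" "u < v" using uv by auto
      have "continuous_on {x..v} g" using g(1) uv by (auto intro: continuous_on_subset)
      moreover have "inj_on g {x..v}" using g(2) uv by (auto intro: inj_on_subset)
      ultimately have "(g x < g u \<and> g u < g v) \<or> (g v < g u \<and> g u < g x)"
        using continuous_inj_imp_mono[of x u v g] xu by blast
      then show ?thesis using gv by linarith
    qed
  qed
  have "f x \<noteq> f y" using inj xy by (auto dest: inj_onD)
  then consider "f x < f y" | "f y < f x" by linarith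
  then show ?thesis
  proof cases
    case 1 then show ?thesis using key[OF cont inj] by blast
  next
    case 2
    have "continuous_on {x..y} (\<lambda>z. - f z)" using cont by (intro continuous_intros)
    moreover have "inj_on (\<lambda>z. - f z) {x..y}" using inj by (auto simp: inj_on_def)
    moreover have "- f x < - f y" using 2 by simp
    ultimately have "\<forall>u v. x \<le> u \<and> u < v \<and> v \<le> y \<longrightarrow> - f u < - f v" using key[of "\<lambda>z. - f z"] by blast
    then show ?thesis by auto
  qed
qed

lemma const_sign:
  fixes p :: "real \<Rightarrow> real"
  assumes cd: "c < d" and cont: "continuous_on {c..d} p"
    and nz: "\<And>z. z \<in> {c<..<d} \<Longrightarrow> p z \<noteq> 0"
  shows "(\<forall>z\<in>{c..d}. 0 \<le> p z) \<or> (\<forall>z\<in>{c..d}. p z \<le> 0)"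
proof (rule ccontr)
  assume "\<not> ?thesis"
  then obtain z1 z2 where z: "z1 \<in> {c..d}" "z2 \<in> {c..d}" "p z1 < 0" "0 < p z2" by force
  have gen: False if h: "z1 \<in> {c..d}" "z2 \<in> {c..d}" "p z1 * p z2 < 0" "z1 < z2" for z1 z2
  proof -
    have c2: "continuous_on {z1..z2} p" using cont h by (auto intro: continuous_on_subset)
    from h(3) consider "p z1 < 0" "0 < p z2" | "p z1 > 0" "p z2 < 0"
      by (auto simp: mult_less_0_iff)
    then obtain w where w: "z1 \<le> w" "w \<le> z2" "p w = 0"
    proof cases
      case 1
      have "\<exists>w. z1 \<le> w \<and> w \<le> z2 \<and> p w = 0"
        by (rule IVT'[of p z1 0 z2]) (use 1 c2 h in auto)
      then show ?thesis using that by blast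
    next
      case 2
      have "\<exists>w. z1 \<le> w \<and> w \<le> z2 \<and> p w = 0"
        by (rule IVT2'[of p z2 0 z1]) (use 2 c2 h in auto)
      then show ?thesis using that by blast
    qed
    have "w \<noteq> z1" "w \<noteq> z2" using w h(3) by auto
    then have "w \<in> {c<..<d}" using w h by auto
    then show False using nz w by auto
  qed
  have "p z1 * p z2 < 0" using z by (simp add: mult_less_0_iff)
  moreover have "z1 \<noteq> z2" using z by auto
  ultimately consider "z1 < z2" | "z2 < z1" by linarith
  then show False
  proof cases
    case 1 then show False using gen[of z1 z2] z \<open>p z1 * p z2 < 0\<close> by blast
  next
    case 2 then show False using gen[of z2 z1] z \<open>p z1 * p z2 < 0\<close> by (simp add: mult.commute)
  qed
qed

lemma cell_int:
  fixes p :: "real \<Rightarrow> real"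
  assumes cd: "c < d" and cont: "continuous_on {c..d} p"
    and nz: "\<And>z. z \<in> {c<..<d} \<Longrightarrow> p z \<noteq> 0"
  shows "integral {c..d} p \<noteq> 0"
    and "\<And>z. z \<in> {c<..<d} \<Longrightarrow> integral {c..d} p * p z > 0"
    and "\<And>x. x \<in> {c..d} \<Longrightarrow> 0 \<le> integral {c..x} p / integral {c..d} p \<and>
                                integral {c..x} p / integral {c..d} p \<le> 1"
proof -
  have m: "(c+d)/2 \<in> {c<..<d}" using cd by auto
  have pos: "integral {c..d} q > 0 \<and> (\<forall>x\<in>{c..d}. 0 \<le> integral {c..x} q \<and> integral {c..x} q \<le> integral {c..d} q)"
    if q: "continuous_on {c..d} q" "\<forall>z\<in>{c..d}. 0 \<le> q z" "q ((c+d)/2) \<noteq> 0" for q :: "real \<Rightarrow> real"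
  proof -
    have "integral {c..d} q \<noteq> 0"
      using integral_eq_0_iff[OF q(1) cd] q m by auto
    moreover have "integral {c..d} q \<ge> 0" using q by (intro integral_nonneg integrable_continuous_interval) auto
    moreover have "0 \<le> integral {c..x} q \<and> integral {c..x} q \<le> integral {c..d} q" if x: "x \<in> {c..d}" for x
    proof
      have "continuous_on {c..x} q" using q(1) x by (auto intro: continuous_on_subset)
      then have ix: "q integrable_on {c..x}" by (rule integrable_continuous_interval)
      show "0 \<le> integral {c..x} q" using q x by (intro integral_nonneg ix) auto
      show "integral {c..x} q \<le> integral {c..d} q"
        using x q by (intro integral_subset_le ix integrable_continuous_interval) auto
    qed
    ultimately show ?thesis by auto
  qed
  from const_sign[OF cd cont nz]
  have "integral {c..d} p \<noteq> 0 \<and> (\<forall>z\<in>{c<..<d}. integral {c..d} p * p z > 0) \<and>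
        (\<forall>x\<in>{c..d}. 0 \<le> integral {c..x} p / integral {c..d} p \<and> integral {c..x} p / integral {c..d} p \<le> 1)"
  proof
    assume s: "\<forall>z\<in>{c..d}. 0 \<le> p z"
    have P: "integral {c..d} p > 0 \<and> (\<forall>x\<in>{c..d}. 0 \<le> integral {c..x} p \<and> integral {c..x} p \<le> integral {c..d} p)"
      using pos[OF cont s] nz m by auto
    have "\<forall>z\<in>{c<..<d}. p z > 0"
    proof
      fix z assume z: "z \<in> {c<..<d}"
      then have "0 \<le> p z" using s by auto
      moreover have "p z \<noteq> 0" using nz z by auto
      ultimately show "p z > 0" by linarith
    qed
    then show ?thesis using P by (auto simp: divide_simps)
  next
    assume s: "\<forall>z\<in>{c..d}. p z \<le> 0"
    have c': "continuous_on {c..d} (\<lambda>z. - p z)" using cont by (intro continuous_intros)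
    have P: "integral {c..d} (\<lambda>z. - p z) > 0 \<and> (\<forall>x\<in>{c..d}. 0 \<le> integral {c..x} (\<lambda>z. - p z) \<and> integral {c..x} (\<lambda>z. - p z) \<le> integral {c..d} (\<lambda>z. - p z))"
      using pos[OF c'] s nz m by auto
    then have P': "integral {c..d} p < 0 \<and> (\<forall>x\<in>{c..d}. integral {c..x} p \<le> 0 \<and> integral {c..d} p \<le> integral {c..x} p)"
      by (simp add: integral_neg)
    have "\<forall>z\<in>{c<..<d}. p z < 0"
    proof
      fix z assume z: "z \<in> {c<..<d}"
      then have "p z \<le> 0" using s by auto
      moreover have "p z \<noteq> 0" using nz z by auto
      ultimately show "p z < 0" by linarith
    qed
    then show ?thesis using P' by (auto simp: divide_simps mult_neg_neg)
  qed
  then show "integral {c..d} p \<noteq> 0"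
    and "\<And>z. z \<in> {c<..<d} \<Longrightarrow> integral {c..d} p * p z > 0"
    and "\<And>x. x \<in> {c..d} \<Longrightarrow> 0 \<le> integral {c..x} p / integral {c..d} p \<and>
                                integral {c..x} p / integral {c..d} p \<le> 1" by auto
qed



lemma chain_pos: "0 < (a::real) * b \<Longrightarrow> 0 < b * c \<Longrightarrow> 0 < a * c"
  by (auto simp: zero_less_mult_iff)

lemma core_sign:
  fixes f p :: "real \<Rightarrow> real" and a b :: real and E :: "real set"
  assumes ab: "a < b" and cont: "continuous_on {a..b} f"
    and E_def: "E = {x\<in>{a<..<b}. local_extremum f x}" and finE: "finite E"
    and pc: "continuous_on UNIV p"
    and pnz: "\<And>z. z \<in> {a<..<b} \<Longrightarrow> z \<notin> E \<Longrightarrow> p z \<noteq> 0"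
    and pflip: "\<And>e. e \<in> E \<Longrightarrow> \<exists>s0>0. \<forall>s. 0 < s \<and> s < s0 \<longrightarrow> p (e - s) * p (e + s) < 0"
  shows "\<exists>M\<in>{-1,1}. \<forall>x y. a \<le> x \<and> x < y \<and> y \<le> b \<and> E \<inter> {x<..<y} = {} \<longrightarrow>
            M * (f y - f x) * p ((x+y)/2) > 0"
proof -
  define adm where "adm x y \<longleftrightarrow> a \<le> x \<and> x < y \<and> y \<le> b \<and> E \<inter> {x<..<y} = {}" for x y
  define Q where "Q x y = (f y - f x) * p ((x+y)/2)" for x y
  have noextE: "\<not> local_extremum f z" if "z \<in> {a<..<b}" "z \<notin> E" for z
    using that E_def by auto
  have base: "Q x y * Q x' y' > 0"
    if A: "adm x y" "adm x' y'" and H: "E \<inter> {min x x'<..<max y y'} = {}" for x y x' y'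
  proof -
    define u where "u = min x x'"
    define v where "v = max y y'"
    have uv: "u < v" "a \<le> u" "v \<le> b" using A by (auto simp: adm_def u_def v_def)
    have cuv: "continuous_on {u..v} f" using cont uv by (auto intro: continuous_on_subset)
    have ne: "\<not> local_extremum f z" if z: "z \<in> {u<..<v}" for z
    proof -
      have "z \<notin> E" using H z by (auto simp: u_def v_def)
      moreover have "z \<in> {a<..<b}" using z uv by auto
      ultimately show ?thesis using noextE by blast
    qed
    have in1: "u \<le> x" "y \<le> v" "u \<le> x'" "y' \<le> v" by (auto simp: u_def v_def)
    have xy: "x < y" "x' < y'" using A by (auto simp: adm_def)
    have mono: "(\<forall>s t. u \<le> s \<and> s < t \<and> t \<le> v \<longrightarrow> f s < f t) \<or>
         (\<forall>s t. u \<le> s \<and> s < t \<and> t \<le> v \<longrightarrow> f t < f s)"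
      by (rule noext_mono[OF uv(1) cuv]) (rule ne)
    have D: "(f y - f x) * (f y' - f x') > 0"
      using mono
    proof (elim disjE)
      assume M: "\<forall>s t. u \<le> s \<and> s < t \<and> t \<le> v \<longrightarrow> f s < f t"
      have "f x < f y" "f x' < f y'" using M in1 xy by auto
      then show ?thesis by (simp add: zero_less_mult_iff)
    next
      assume M: "\<forall>s t. u \<le> s \<and> s < t \<and> t \<le> v \<longrightarrow> f t < f s"
      have "f y < f x" "f y' < f x'" using M in1 xy by auto
      then show ?thesis by (simp add: zero_less_mult_iff)
    qed
    have pcuv: "continuous_on {u..v} p" using pc by (auto intro: continuous_on_subset)
    have pnz': "p z \<noteq> 0" if z: "z \<in> {u<..<v}" for z
    proof -
      have "z \<notin> E" using H z by (auto simp: u_def v_def)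
      moreover have "z \<in> {a<..<b}" using z uv by auto
      ultimately show ?thesis using pnz by blast
    qed
    have ci2: "integral {u..v} p * p z > 0" if zz: "z \<in> {u<..<v}" for z
      using cell_int(2)[of u v p z] uv(1) pcuv pnz' zz by blast
    have m1: "(x+y)/2 \<in> {u<..<v}" "(x'+y')/2 \<in> {u<..<v}" using in1 xy by auto
    have P1: "integral {u..v} p * p ((x+y)/2) > 0" "integral {u..v} p * p ((x'+y')/2) > 0"
      using ci2 m1 by auto
    have P: "p ((x+y)/2) * p ((x'+y')/2) > 0"
      using chain_pos[OF P1(1)[simplified mult.commute[of "integral {u..v} p"]] P1(2)] .
    have "Q x y * Q x' y' = ((f y - f x) * (f y' - f x')) * (p ((x+y)/2) * p ((x'+y')/2))"
      by (simp add: Q_def algebra_simps)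
    then show ?thesis using D P by simp
  qed
  have loc: "\<exists>s>0. adm (e - s) e \<and> adm e (e + s) \<and> Q (e - s) e * Q e (e + s) > 0"
    if eE: "e \<in> E" for e
  proof -
    have eab: "a < e" "e < b" using eE E_def by auto
    have le: "local_extremum f e" using eE E_def by auto
    define D where "D = (\<lambda>e'. \<bar>e' - e\<bar>) ` (E - {e})"
    define s1 where "s1 = Min (insert (min (e - a) (b - e)) D)"
    have finD: "finite D" using finE by (simp add: D_def)
    have s1pos: "s1 > 0"
      unfolding s1_def using finD eab by (auto simp: D_def)
    have s1le1: "s1 \<le> min (e - a) (b - e)"
      unfolding s1_def using finD by (intro Min_le) auto
    have s1le2: "s1 \<le> \<bar>e' - e\<bar>" if "e' \<in> E" "e' \<noteq> e" for e'
      unfolding s1_def using finD that by (intro Min_le) (auto simp: D_def)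
    note s1le = s1le1 s1le2
    obtain s0 where s0: "s0 > 0" "\<And>s. 0 < s \<and> s < s0 \<Longrightarrow> p (e - s) * p (e + s) < 0"
      using pflip[OF eE] by blast
    obtain r where r: "r > 0" "(\<forall>y. \<bar>y - e\<bar> < r \<longrightarrow> f y \<le> f e) \<or> (\<forall>y. \<bar>y - e\<bar> < r \<longrightarrow> f e \<le> f y)"
      using le unfolding local_extremum_def by blast
    define s where "s = min (min s1 r) s0 / 2"
    have s: "s > 0" "s < s1" "s < r" "s < s0" using s1pos r s0 by (auto simp: s_def)
    have noE: "E \<inter> {e - s<..<e + s} \<subseteq> {e}"
    proof
      fix z assume z: "z \<in> E \<inter> {e - s<..<e + s}"
      show "z \<in> {e}"
      proof (rule ccontr)
        assume "z \<notin> {e}"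
        then have "s1 \<le> \<bar>z - e\<bar>" using s1le(2)[of z] z by auto
        moreover have "\<bar>z - e\<bar> < s" using z by auto
        ultimately show False using s by linarith
      qed
    qed
    have A1: "adm (e - s) e" "adm e (e + s)"
      unfolding adm_def using s s1le(1) noE by auto
    have near: "\<not> local_extremum f z" if z: "z \<in> {e - s<..<e + s}" "z \<noteq> e" for z
    proof -
      have "z \<notin> E" using noE z by blast
      moreover have "z \<in> {a<..<b}" using z s s1le(1) by auto
      ultimately show ?thesis using noextE by blast
    qed
    have inj1: "inj_on f {e - s..e}"
      by (rule noext_inj) (use cont eab s s1le(1) near in \<open>auto intro: continuous_on_subset\<close>)
    have inj2: "inj_on f {e..e + s}"
      by (rule noext_inj) (use cont eab s s1le(1) near in \<open>auto intro: continuous_on_subset\<close>)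
    have n1: "f (e - s) \<noteq> f e" using inj1 s by (auto dest: inj_onD)
    have n2: "f (e + s) \<noteq> f e" using inj2 s by (auto dest: inj_onD)
    have d1: "\<bar>(e - s) - e\<bar> < r" "\<bar>(e + s) - e\<bar> < r" using s by auto
    have Df: "(f e - f (e - s)) * (f (e + s) - f e) < 0"
      using r(2)
    proof (elim disjE)
      assume R: "\<forall>y. \<bar>y - e\<bar> < r \<longrightarrow> f y \<le> f e"
      then have "f (e - s) \<le> f e" "f (e + s) \<le> f e" using d1 by blast+
      then have "f (e - s) < f e" "f (e + s) < f e" using n1 n2 by linarith+
      then show ?thesis by (simp add: mult_less_0_iff)
    next
      assume R: "\<forall>y. \<bar>y - e\<bar> < r \<longrightarrow> f e \<le> f y"
      then have "f e \<le> f (e - s)" "f e \<le> f (e + s)" using d1 by blast+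
      then have "f e < f (e - s)" "f e < f (e + s)" using n1 n2 by linarith+
      then show ?thesis by (simp add: mult_less_0_iff)
    qed
    have Dp: "p (e - s/2) * p (e + s/2) < 0" using s0(2)[of "s/2"] s by auto
    have m: "((e - s) + e)/2 = e - s/2" "(e + (e + s))/2 = e + s/2" by auto
    have "Q (e - s) e * Q e (e + s) = ((f e - f (e - s)) * (f (e + s) - f e)) * (p (e - s/2) * p (e + s/2))"
      unfolding Q_def m by (simp add: algebra_simps)
    also have "\<dots> > 0" using Df Dp by (simp add: mult_neg_neg)
    finally show ?thesis using A1 s by blast
  qed
  have ind: "\<forall>x y x' y'. adm x y \<and> adm x' y' \<and> x \<le> x' \<and> card (E \<inter> {x<..<y'}) \<le> n \<longrightarrow>
              Q x y * Q x' y' > 0" for n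
  proof (induction n)
    case 0
    show ?case
    proof (intro allI impI)
      fix x y x' y' assume h: "adm x y \<and> adm x' y' \<and> x \<le> x' \<and> card (E \<inter> {x<..<y'}) \<le> 0"
      have "E \<inter> {x<..<y'} = {}" using h finE by auto
      moreover have "E \<inter> {x<..<y} = {}" using h by (auto simp: adm_def)
      ultimately have "E \<inter> {min x x'<..<max y y'} = {}" using h by (auto simp: max_def)
      then show "Q x y * Q x' y' > 0" using base h by blast
    qed
  next
    case (Suc n)
    show ?case
    proof (intro allI impI)
      fix x y x' y' assume h: "adm x y \<and> adm x' y' \<and> x \<le> x' \<and> card (E \<inter> {x<..<y'}) \<le> Suc n"
      show "Q x y * Q x' y' > 0"
      proof (cases "E \<inter> {min x x'<..<max y y'} = {}")
        case True then show ?thesis using base h by blast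
      next
        case False
        have Exy: "E \<inter> {x<..<y} = {}" and Ex'y': "E \<inter> {x'<..<y'} = {}" using h by (auto simp: adm_def)
        have mx: "min x x' = x" using h by auto
        have yy: "y < y'"
        proof (rule ccontr)
          assume "\<not> y < y'"
          then have "max y y' = y" by auto
          then show False using False Exy mx by simp
        qed
        have ne: "E \<inter> {x<..<y'} \<noteq> {}" using False mx yy by (auto simp: max_def)
        define S where "S = E \<inter> {x<..<y'}"
        have finS: "finite S" using finE by (simp add: S_def)
        define e where "e = Min S"
        have eS: "e \<in> S" unfolding e_def using finS ne by (intro Min_in) (auto simp: S_def)
        have emin: "\<And>z. z \<in> S \<Longrightarrow> e \<le> z" using finS by (simp add: e_def)
        have eE: "e \<in> E" and exy: "x < e" "e < y'" using eS by (auto simp: S_def)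
        have ye: "y \<le> e" using Exy eE exy by (auto simp: not_less[symmetric])
        have ex': "e \<le> x'" using Ex'y' eE exy by (auto simp: not_less[symmetric])
        obtain s where s: "s > 0" "adm (e - s) e" "adm e (e + s)" "Q (e - s) e * Q e (e + s) > 0"
          using loc[OF eE] by blast
        have h1: "Q x y * Q (e - s) e > 0"
        proof (rule base)
          show "adm x y" "adm (e - s) e" using h s by auto
          show "E \<inter> {min x (e - s)<..<max y e} = {}"
          proof (rule ccontr)
            assume "E \<inter> {min x (e - s)<..<max y e} \<noteq> {}"
            then obtain z where z: "z \<in> E" "min x (e - s) < z" "z < e" using ye by (auto simp: max_def)
            show False
            proof (cases "x < z")
              case True
              then have "z \<in> S" using z exy by (auto simp: S_def)
              then show False using emin z by force
            next
              case False
              then have "e - s < z" using z by auto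
              then show False using s(2) z by (auto simp: adm_def)
            qed
          qed
        qed
        have sub: "E \<inter> {e<..<y'} \<subseteq> S - {e}" using exy by (auto simp: S_def)
        have "card (E \<inter> {e<..<y'}) \<le> card (S - {e})" using sub finS by (intro card_mono) auto
        also have "\<dots> = card S - 1" using eS finS by simp
        also have "\<dots> \<le> n" using h unfolding S_def by linarith
        finally have cn: "card (E \<inter> {e<..<y'}) \<le> n" .
        have h2: "Q e (e + s) * Q x' y' > 0"
          using Suc.IH s(3) h ex' cn by blast
        show ?thesis using chain_pos[OF chain_pos[OF h1 s(4)] h2] .
      qed
    qed
  qed
  define s0 where "s0 = Min (insert (b - a) ((\<lambda>e. e - a) ` E))"
  have s0: "s0 > 0" "s0 \<le> b - a" "\<And>e. e \<in> E \<Longrightarrow> s0 \<le> e - a"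
    unfolding s0_def using finE ab E_def by auto
  have A0: "adm a (a + s0)"
    unfolding adm_def using s0 by force
  have Q0: "Q a (a + s0) * Q a (a + s0) > 0"
    using base[OF A0 A0] A0 by (simp add: adm_def)
  define M :: real where "M = (if Q a (a + s0) > 0 then 1 else -1)"
  show ?thesis
  proof (rule bexI[of _ M], intro allI impI)
    fix x y assume xy: "a \<le> x \<and> x < y \<and> y \<le> b \<and> E \<inter> {x<..<y} = {}"
    then have "adm x y" by (simp add: adm_def)
    then have "Q a (a + s0) * Q x y > 0" using ind[of "card (E \<inter> {a<..<y})"] A0 xy by blast
    then have "M * Q x y > 0" unfolding M_def by (auto simp: zero_less_mult_iff)
    then show "M * (f y - f x) * p ((x+y)/2) > 0" by (simp add: Q_def mult.assoc)
  next
    show "M \<in> {-1, 1}" by (simp add: M_def)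
  qed
qed



lemma int_ind:
  fixes P :: "real \<Rightarrow> real"
  assumes cd: "c \<le> d"
  shows "integral {..x} (\<lambda>\<xi>. P \<xi> * (if c \<le> \<xi> \<and> \<xi> < d then 1 else 0)) =
         integral {c..max c (min x d)} P"
proof -
  have "integral {..x} (\<lambda>\<xi>. P \<xi> * (if c \<le> \<xi> \<and> \<xi> < d then 1 else 0)) =
        integral {..x} (\<lambda>\<xi>. if \<xi> \<in> {c..<d} then P \<xi> else 0)"
    by (rule integral_cong) auto
  also have "\<dots> = integral ({c..<d} \<inter> {..x}) P" by (rule integral_restrict_Int)
  also have "\<dots> = integral {c..max c (min x d)} P"
  proof (rule integral_spike_set)
    show "negligible {\<xi> \<in> {c..<d} \<inter> {..x} - {c..max c (min x d)}. P \<xi> \<noteq> 0}"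
      by (rule negligible_subset[of "{}"]) auto
    show "negligible {\<xi> \<in> {c..max c (min x d)} - {c..<d} \<inter> {..x}. P \<xi> \<noteq> 0}"
      by (rule negligible_subset[of "{c, d}"]) (auto simp: max_def min_def split: if_splits)
  qed
  finally show ?thesis .
qed

lemma Bsp1:
  assumes "1 \<le> k" "k < length tau"
  shows "Bsp 1 tau k \<xi> = (if tau!(k-1) \<le> \<xi> \<and> \<xi> < tau!k then 1 else 0)"
proof -
  have a: "min (length tau - 1) (k - 1) = k - 1" "min (length tau - 1) k = k" using assms by auto
  have b: "Suc (k - 1) = k" using assms by auto
  show ?thesis using a b by (simp add: Bsp_def ext_knots_def)
qed

lemma Bstar1:
  assumes "1 \<le> k" "k < length tau" "sorted tau"
  shows "Bstar H alpha M 1 tau k x =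
    M * integral {tau!(k-1)..max (tau!(k-1)) (min x (tau!k))} (\<lambda>\<xi>. \<Prod>h=1..H. \<xi> - alpha h)"
proof -
  have cd: "tau!(k-1) \<le> tau!k" using assms by (intro sorted_nth_mono) auto
  have "Bstar H alpha M 1 tau k x =
     M * integral {..x} (\<lambda>\<xi>. (\<Prod>h=1..H. \<xi> - alpha h) * (if tau!(k-1) \<le> \<xi> \<and> \<xi> < tau!k then 1 else 0))"
    unfolding Bstar_def using assms Bsp1[OF assms(1,2)] by simp
  also have "\<dots> = M * integral {tau!(k-1)..max (tau!(k-1)) (min x (tau!k))} (\<lambda>\<xi>. \<Prod>h=1..H. \<xi> - alpha h)"
    by (simp only: int_ind[OF cd])
  finally show ?thesis .
qed

lemma Bsp_last:
  assumes "length tau \<ge> 1"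
  shows "Bsp 1 tau (length tau) \<xi> = 0"
proof -
  have a: "min (length tau - 1) (length tau - 1) = length tau - 1" "min (length tau - 1) (length tau) = length tau - 1" by auto
  have b: "Suc (length tau - 1) = length tau" using assms by auto
  show ?thesis using a b by (simp add: Bsp_def ext_knots_def)
qed

lemma tele: fixes i :: nat assumes "1 \<le> i" shows "(\<Sum>k\<in>{1..<i}. g k - g (k - 1)) = g (i - 1) - (g 0 :: real)"
  using assms
proof (induction i rule: dec_induct)
  case base then show ?case by simp
next
  case (step n)
  then show ?case by (simp add: sum.op_ivl_Suc)
qed

lemma sum_split3:
  fixes F :: "nat \<Rightarrow> real"
  assumes "1 \<le> i" "i < L"
  shows "(\<Sum>k\<in>{1..<L}. if k < i then F k else if k = i then c else 0) = (\<Sum>k\<in>{1..<i}. F k) + c"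
proof -
  have "Suc i \<le> L" using assms by simp
  then show ?thesis
proof (induction L rule: dec_induct)
  case base
  have "(\<Sum>k\<in>{1..<Suc i}. if k < i then F k else if k = i then c else 0) =
        (\<Sum>k\<in>{1..<i}. if k < i then F k else if k = i then c else 0) + c"
    using assms(1) by (simp add: sum.op_ivl_Suc)
  also have "(\<Sum>k\<in>{1..<i}. if k < i then F k else if k = i then c else 0) = (\<Sum>k\<in>{1..<i}. F k)"
    by (rule sum.cong) auto
  finally show ?case .
next
  case (step n)
  then show ?case using assms(1) by (simp add: sum.op_ivl_Suc)
qed
qed



lemma alpha_facts:
  fixes E :: "real set" and a :: real and H :: nat
  assumes finE: "finite E" and Esub: "\<And>e. e \<in> E \<Longrightarrow> a < e" and cardE: "card E \<le> H"
  and adef: "alpha = (\<lambda>h. if h \<le> length (sorted_list_of_set E) then sorted_list_of_set E ! (h - 1) else a - real h)"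
  shows "inj_on alpha {1..H}"
    and "\<And>z. a < z \<Longrightarrow> (\<Prod>h=1..H. z - alpha h) = 0 \<Longrightarrow> z \<in> E"
    and "\<And>e. e \<in> E \<Longrightarrow> \<exists>s0>0. \<forall>s. 0 < s \<and> s < s0 \<longrightarrow>
            (\<Prod>h=1..H. (e - s) - alpha h) * (\<Prod>h=1..H. (e + s) - alpha h) < 0"
proof -
  define es where "es = sorted_list_of_set E"
  define m where "m = length es"
  have es: "set es = E" "distinct es" "m = card E" using finE by (auto simp: es_def m_def)
  have alpha: "alpha h = (if h \<le> m then es ! (h - 1) else a - real h)" for h
    by (simp add: adef es_def m_def)
  have inE: "es ! (h - 1) \<in> E" if "1 \<le> h" "h \<le> m" for h
    using that es(1) by (auto simp: m_def)
  show inj: "inj_on alpha {1..H}"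
  proof (rule inj_onI)
    fix h h' assume h: "h \<in> {1..H}" "h' \<in> {1..H}" and eq: "alpha h = alpha h'"
    consider "h \<le> m" "h' \<le> m" | "h \<le> m" "\<not> h' \<le> m" | "\<not> h \<le> m" "h' \<le> m" | "\<not> h \<le> m" "\<not> h' \<le> m" by blast
    then show "h = h'"
    proof cases
      case 1
      then have "es ! (h - 1) = es ! (h' - 1)" using eq by (simp add: alpha)
      then have "h - 1 = h' - 1" using nth_eq_iff_index_eq[OF es(2), of "h - 1" "h' - 1"] 1 h by (auto simp: m_def)
      then show ?thesis using h by auto
    next
      case 2
      then have "es ! (h - 1) = a - real h'" using eq by (simp add: alpha)
      moreover have "a < es ! (h - 1)" using Esub inE[of h] 2 h by auto
      ultimately show ?thesis using h by auto
    next
      case 3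
      then have "es ! (h' - 1) = a - real h" using eq by (simp add: alpha)
      moreover have "a < es ! (h' - 1)" using Esub inE[of h'] 3 h by auto
      ultimately show ?thesis using h by auto
    next
      case 4
      then show ?thesis using eq by (simp add: alpha)
    qed
  qed
  show "z \<in> E" if z: "a < z" "(\<Prod>h=1..H. z - alpha h) = 0" for z
  proof -
    obtain h where h: "h \<in> {1..H}" "z - alpha h = 0" using z(2) by (auto simp: prod_zero_iff)
    show ?thesis
    proof (cases "h \<le> m")
      case True then show ?thesis using h inE[of h] by (auto simp: alpha)
    next
      case False then show ?thesis using h z(1) by (auto simp: alpha)
    qed
  qed
  show "\<exists>s0>0. \<forall>s. 0 < s \<and> s < s0 \<longrightarrow>
            (\<Prod>h=1..H. (e - s) - alpha h) * (\<Prod>h=1..H. (e + s) - alpha h) < 0" if eE: "e \<in> E" for e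
  proof -
    obtain i where i: "i < m" "es ! i = e" using eE es(1) by (auto simp: in_set_conv_nth m_def)
    define h0 where "h0 = Suc i"
    have h0: "h0 \<in> {1..H}" "alpha h0 = e" using i es(3) cardE by (auto simp: h0_def alpha)
    define r where "r = (\<lambda>z. \<Prod>h\<in>{1..H} - {h0}. z - alpha h)"
    have split: "(\<Prod>h=1..H. z - alpha h) = (z - e) * r z" for z
      unfolding r_def using prod.remove[of "{1..H}" h0 "\<lambda>h. z - alpha h"] h0 by simp
    have re: "r e \<noteq> 0"
    proof
      assume "r e = 0"
      then have "\<exists>h\<in>{1..H} - {h0}. e - alpha h = 0"
        unfolding r_def by (subst (asm) prod_zero_iff) auto
      then obtain h where h: "h \<in> {1..H} - {h0}" "e - alpha h = 0" by blast
      then have "alpha h = alpha h0" using h0 by simp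
      then show False using inj h h0 by (auto dest: inj_onD)
    qed
    have rc: "isCont r e" unfolding r_def by (intro continuous_intros)
    obtain d where d: "d > 0" "\<And>z. dist z e < d \<Longrightarrow> dist (r z) (r e) < \<bar>r e\<bar>"
      using rc[unfolded continuous_at_eps_delta] re by (metis zero_less_abs_iff)
    have rs: "r z * r e > 0" if "\<bar>z - e\<bar> < d" for z
    proof -
      have "\<bar>r z - r e\<bar> < \<bar>r e\<bar>" using d(2)[of z] that by (simp add: dist_real_def)
      then show ?thesis using re by (cases "r e > 0") (auto simp: abs_if zero_less_mult_iff split: if_splits)
    qed
    show ?thesis
    proof (intro exI[of _ d] conjI allI impI)
      show "d > 0" by fact
      fix s assume s: "0 < s \<and> s < d"
      have r1: "r (e - s) * r e > 0" "r (e + s) * r e > 0" using rs s by auto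
      have rr: "r (e - s) * r (e + s) > 0"
      proof -
        have "(r (e - s) * r e) * (r (e + s) * r e) > 0" using r1 by simp
        then have "(r (e - s) * r (e + s)) * (r e * r e) > 0" by (simp add: algebra_simps)
        then show ?thesis by (simp add: zero_less_mult_iff)
      qed
      have "(\<Prod>h=1..H. (e - s) - alpha h) * (\<Prod>h=1..H. (e + s) - alpha h) =
            - (s * s) * (r (e - s) * r (e + s))"
        unfolding split by (simp add: algebra_simps)
      also have "\<dots> < 0" using rr s by (simp add: mult_pos_pos)
      finally show "(\<Prod>h=1..H. (e - s) - alpha h) * (\<Prod>h=1..H. (e + s) - alpha h) < 0" .
    qed
  qed
qed



theorem theorem1:
  fixes a b :: real and H :: nat and f0 :: "real \<Rightarrow> real" and \<epsilon> :: real
  assumes "a < b" and "H \<ge> 1" and "f0 \<in> FH H {a..b}" and "\<epsilon> > 0"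
  shows "\<exists>tau fLX. lx_spline H tau fLX \<and>
           (SUP x\<in>{a..b}. \<bar>f0 x - fLX x\<bar>) < \<epsilon>"
proof -
  note ab = assms(1)
  define E where "E = {x\<in>{a<..<b}. local_extremum f0 x}"
  obtain fd where fd: "\<forall>x\<in>{a..b}. (f0 has_real_derivative fd x) (at x within {a..b})"
    and finE: "finite E" and cardE: "card E \<le> H"
    using assms(3) unfolding FH_def C1_on_def E_def interior_atLeastAtMost_real by blast
  have cont: "continuous_on {a..b} f0" by (rule DERIV_continuous_on) (use fd in blast)
  have Esub: "\<And>e. e \<in> E \<Longrightarrow> a < e" "\<And>e. e \<in> E \<Longrightarrow> e < b" by (auto simp: E_def)
  define alpha where "alpha = (\<lambda>h. if h \<le> length (sorted_list_of_set E) then sorted_list_of_set E ! (h - 1) else a - real h)"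
  define p where "p = (\<lambda>z. \<Prod>h=1..H. z - alpha h)"
  note AF = alpha_facts[OF finE Esub(1) cardE alpha_def]
  have injA: "inj_on alpha {1..H}" by (rule AF(1))
  have proot: "\<And>z. a < z \<Longrightarrow> p z = 0 \<Longrightarrow> z \<in> E" unfolding p_def using AF(2) by blast
  have pflip: "\<And>e. e \<in> E \<Longrightarrow> \<exists>s0>0. \<forall>s. 0 < s \<and> s < s0 \<longrightarrow> p (e - s) * p (e + s) < 0"
    unfolding p_def using AF(3) by blast
  have pc: "continuous_on UNIV p" unfolding p_def by (intro continuous_intros)
  have pnz: "p z \<noteq> 0" if "z \<in> {a<..<b}" "z \<notin> E" for z using proot that by auto
  obtain M where M: "M \<in> {-1, 1}"
    and Msign: "\<And>x y. a \<le> x \<and> x < y \<and> y \<le> b \<and> E \<inter> {x<..<y} = {} \<Longrightarrow> M * (f0 y - f0 x) * p ((x+y)/2) > 0"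
    using core_sign[OF ab cont E_def finE pc pnz pflip] by blast
  have MM: "M * M = 1" using M by auto
  have uc: "uniformly_continuous_on {a..b} f0" by (rule compact_uniformly_continuous[OF cont compact_Icc])
  obtain \<delta> where \<delta>: "\<delta> > 0" "\<And>x x'. x \<in> {a..b} \<Longrightarrow> x' \<in> {a..b} \<Longrightarrow> dist x' x < \<delta> \<Longrightarrow> dist (f0 x') (f0 x) < \<epsilon>/2"
    using uc[unfolded uniformly_continuous_on_def, rule_format, of "\<epsilon>/2"] assms(4) by auto
  obtain N :: nat where N: "(b - a) / \<delta> < real N" using reals_Archimedean2 by blast
  have Npos: "real N > 0" using N ab \<delta>(1) by (smt (verit) divide_pos_pos)
  define hh where "hh = (b - a) / real N"
  have hh: "hh > 0" "hh < \<delta>" "a + hh * real N = b"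
    using Npos ab N \<delta>(1) by (auto simp: hh_def field_simps)
  define G where "G = (\<lambda>i. a + hh * real i) ` {0..N}"
  define K where "K = E \<union> G"
  have finK: "finite K" using finE by (simp add: K_def G_def)
  have aK: "a \<in> K" unfolding K_def G_def by (auto intro!: image_eqI[of _ _ 0])
  have bK: "b \<in> K" unfolding K_def G_def using hh(3) by (auto intro!: image_eqI[of _ _ N])
  have Kab: "z \<in> {a..b}" if "z \<in> K" for z
  proof -
    { assume "z \<in> G"
      then obtain i where i: "i \<le> N" "z = a + hh * real i" by (auto simp: G_def)
      have "hh * real i \<le> hh * real N" using i hh by (intro mult_left_mono) auto
      then have ?thesis using i hh by auto }
    then show ?thesis using that Esub by (auto simp: K_def less_imp_le)
  qed
  define tau where "tau = sorted_list_of_set K"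
  define L where "L = length tau"
  have settau: "set tau = K" using finK by (simp add: tau_def)
  have sorted: "sorted tau" by (simp add: tau_def)
  have ssorted: "sorted_wrt (<) tau" by (simp add: tau_def)
  have LK: "L = card K" using finK by (simp add: L_def tau_def)
  have L2: "L \<ge> 2"
  proof -
    have "card {a, b} \<le> card K" using aK bK finK by (intro card_mono) auto
    then show ?thesis using ab LK by auto
  qed
  have T1: "tau ! i < tau ! j" if "i < j" "j < L" for i j
    using sorted_wrt_nth_less[OF ssorted that(1)] that by (simp add: L_def)
  have Tmono: "tau ! i \<le> tau ! j" if "i \<le> j" "j < L" for i j
    using sorted_nth_mono[OF sorted that(1)] that by (simp add: L_def)
  have T1': "i < j" if "i < L" "j < L" "tau ! i < tau ! j" for i j
  proof (rule ccontr)
    assume "\<not> i < j" then have "j \<le> i" by simp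
    then show False using Tmono[of j i] that by auto
  qed
  have Tin: "tau ! i \<in> K" if "i < L" for i using that settau by (auto simp: L_def)
  have Tab: "a \<le> tau ! i \<and> tau ! i \<le> b" if "i < L" for i using Kab[OF Tin[OF that]] by auto
  have T0: "tau ! 0 = a"
  proof -
    obtain j where j: "j < L" "tau ! j = a" using aK settau by (auto simp: in_set_conv_nth L_def)
    have "tau ! 0 \<le> tau ! j" using j by (intro Tmono) auto
    then show ?thesis using Tab[of 0] j L2 by auto
  qed
  have Tgap: "\<not> (tau ! (k - 1) < z \<and> z < tau ! k)" if k: "1 \<le> k" "k < L" and z: "z \<in> K" for k z
  proof
    assume zz: "tau ! (k - 1) < z \<and> z < tau ! k"
    obtain j where j: "j < L" "tau ! j = z" using z settau by (auto simp: in_set_conv_nth L_def)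
    have "k - 1 < j" using T1'[of "k - 1" j] k j zz by auto
    moreover have "j < k" using T1'[of j k] k j zz by auto
    ultimately show False by auto
  qed
  have Tcell: "tau ! (k - 1) < tau ! k" if "1 \<le> k" "k < L" for k using T1[of "k - 1" k] that by auto
  have TnoE: "E \<inter> {tau ! (k - 1)<..<tau ! k} = {}" if "1 \<le> k" "k < L" for k
    using Tgap[OF that] by (auto simp: K_def)
  have Tlen: "tau ! k - tau ! (k - 1) < \<delta>" if k: "1 \<le> k" "k < L" for k
  proof -
    define c where "c = tau ! (k - 1)"
    define d where "d = tau ! k"
    have cab: "a \<le> c" "d \<le> b" using Tab[of "k - 1"] Tab[of k] k by (auto simp: c_def d_def)
    define y where "y = (c - a) / hh"
    have y0: "y \<ge> 0" using cab hh by (simp add: y_def)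
    have hy: "hh * y = c - a" using hh by (simp add: y_def)
    define q where "q = nat \<lfloor>y\<rfloor> + 1"
    have rq: "real q = of_int \<lfloor>y\<rfloor> + 1" using y0 by (simp add: q_def)
    have q1: "y < real q" "real q \<le> y + 1" using rq by linarith+
    define g where "g = a + hh * real q"
    have gc: "c < g" using mult_strict_left_mono[OF q1(1) hh(1)] hy by (simp add: g_def)
    have gc2: "g \<le> c + hh"
    proof -
      have "hh * real q \<le> hh * (y + 1)" using q1(2) hh by (intro mult_left_mono) auto
      then show ?thesis using hy by (simp add: g_def algebra_simps)
    qed
    have "d \<le> g"
    proof (cases "q \<le> N")
      case True
      then have "g \<in> K" unfolding K_def G_def g_def by auto
      then show ?thesis using Tgap[OF k, of g] gc by (auto simp: c_def d_def)
    next
      case False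
      then have "real q \<ge> real N + 1" by simp
      then have "hh * real q \<ge> hh * (real N + 1)" using hh by (intro mult_left_mono) auto
      then have "g \<ge> b + hh" using hh(3) by (simp add: g_def algebra_simps)
      then show ?thesis using cab hh by auto
    qed
    then show ?thesis using gc2 hh by (simp add: c_def d_def)
  qed
  have pcell: "p z \<noteq> 0" if k: "1 \<le> k" "k < L" and z: "z \<in> {tau ! (k - 1)<..<tau ! k}" for k z
  proof
    assume "p z = 0"
    moreover have "a \<le> tau ! (k - 1)" using Tab[of "k - 1"] k by (simp add: less_imp_diff_less)
    then have "a < z" using z by auto
    ultimately have "z \<in> E" using proot by blast
    then show False using TnoE[OF k] z by auto
  qed
  have pcon: "continuous_on S p" for S using pc by (auto intro: continuous_on_subset)
  define Ip where "Ip k = integral {tau ! (k - 1)..tau ! k} p" for k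
  define Dl where "Dl k = f0 (tau ! k) - f0 (tau ! (k - 1))" for k
  have CI2: "Ip k * p z > 0" if k: "1 \<le> k" "k < L" and z: "z \<in> {tau ! (k - 1)<..<tau ! k}" for k z
    unfolding Ip_def using cell_int(2)[of "tau ! (k - 1)" "tau ! k" p z] Tcell[OF k] pcon pcell[OF k] z by blast
  have CI1: "Ip k \<noteq> 0" if k: "1 \<le> k" "k < L" for k
  proof -
    have "(tau ! (k - 1) + tau ! k) / 2 \<in> {tau ! (k - 1)<..<tau ! k}" using Tcell[OF k] by auto
    then show ?thesis using CI2[OF k] by fastforce
  qed
  have CI3: "0 \<le> integral {tau ! (k - 1)..x} p / Ip k \<and> integral {tau ! (k - 1)..x} p / Ip k \<le> 1"
    if k: "1 \<le> k" "k < L" and x: "x \<in> {tau ! (k - 1)..tau ! k}" for k x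
    unfolding Ip_def using cell_int(3)[of "tau ! (k - 1)" "tau ! k" p x] Tcell[OF k] pcon pcell[OF k] x by blast
  define beta where "beta k = (if k = 0 then f0 a else if k < L then Dl k / (M * Ip k) else 0)" for k
  have beta_pos: "beta k \<ge> 0" if "k \<ge> 1" for k
  proof (cases "k < L")
    case False then show ?thesis using that by (simp add: beta_def)
  next
    case True
    note k = that True
    define z where "z = (tau ! (k - 1) + tau ! k) / 2"
    have z: "z \<in> {tau ! (k - 1)<..<tau ! k}" using Tcell[OF k] by (auto simp: z_def)
    have s1: "M * Dl k * p z > 0" unfolding z_def Dl_def
      using Msign[of "tau ! (k - 1)" "tau ! k"] Tab[of "k - 1"] Tab[of k] k Tcell[OF k] TnoE[OF k] by auto
    have s2: "Ip k * p z > 0" using CI2[OF k z] .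
    have "(M * Dl k * Ip k) * (p z * p z) > 0"
      using mult_pos_pos[OF s1 s2] by (simp add: algebra_simps)
    then have s3: "M * Dl k * Ip k > 0" by (simp add: zero_less_mult_iff)
    have eqn: "beta k * ((M * Ip k) * (M * Ip k)) = M * Dl k * Ip k"
      using k CI1[OF k] M by (auto simp: beta_def field_simps)
    have "beta k * ((M * Ip k) * (M * Ip k)) > 0" unfolding eqn by (rule s3)
    then show ?thesis by (simp add: zero_less_mult_iff)
  qed
  define fLX where "fLX = (\<lambda>x. \<Sum>k=0..length tau + 1 - 1. beta k * Bstar H alpha M 1 tau k x)"
  have ex: "\<exists>j bt al MMM. 1 \<le> j \<and> (\<forall>k\<ge>1. 0 \<le> bt k) \<and> inj_on al {1..H} \<and> MMM \<in> {-1,1} \<and>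
      fLX = (\<lambda>x. \<Sum>k = 0..length tau + j - 1. bt k * Bstar H al MMM j tau k x)"
    apply (rule exI[of _ 1], rule exI[of _ beta], rule exI[of _ alpha], rule exI[of _ M])
    using beta_pos injA M by (simp add: fLX_def)
  have lx: "lx_spline H tau fLX"
    unfolding lx_spline_def using sorted L2 ex by (simp add: L_def)
  have bound: "\<bar>f0 x - fLX x\<bar> \<le> \<epsilon>/2" if x: "x \<in> {a..b}" for x
  proof -
    obtain i where i: "1 \<le> i" "i < L" "tau ! (i - 1) \<le> x" "x \<le> tau ! i"
    proof -
      have ex: "\<exists>j. j < L \<and> x \<le> tau ! j"
        using bK settau x by (auto simp: in_set_conv_nth L_def)
      define i0 where "i0 = (LEAST j. j < L \<and> x \<le> tau ! j)"
      have i0: "i0 < L" "x \<le> tau ! i0" using LeastI_ex[OF ex] by (auto simp: i0_def)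
      show ?thesis
      proof (cases "i0 = 0")
        case True
        then have "x = a" using i0 T0 x by auto
        then show ?thesis using that[of 1] T0 Tab[of 1] L2 by auto
      next
        case False
        have "\<not> (i0 - 1 < L \<and> x \<le> tau ! (i0 - 1))"
          using not_less_Least[of "i0 - 1" "\<lambda>j. j < L \<and> x \<le> tau ! j"] False by (auto simp: i0_def)
        then have "tau ! (i0 - 1) < x" using i0 by auto
        then show ?thesis using that[of i0] i0 False by auto
      qed
    qed
    define c where "c = tau ! (i - 1)"
    define d where "d = tau ! i"
    define lam where "lam = integral {c..x} p / Ip i"
    have lam: "0 \<le> lam" "lam \<le> 1" using CI3[OF i(1,2), of x] i by (auto simp: lam_def c_def)
    have trm: "beta k * Bstar H alpha M 1 tau k x =
        (if k < i then Dl k else if k = i then Dl i * lam else 0)" if k: "k \<in> {1..<L}" for k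
    proof -
      have k1: "1 \<le> k" "k < L" using k by auto
      have B: "Bstar H alpha M 1 tau k x =
          M * integral {tau!(k-1)..max (tau!(k-1)) (min x (tau!k))} p"
        unfolding p_def using Bstar1[OF k1(1) _ sorted] k1 by (simp add: L_def)
      have bM: "beta k * M = Dl k / Ip k" using k1 MM by (auto simp: beta_def field_simps)
      have eq: "beta k * Bstar H alpha M 1 tau k x = Dl k * integral {tau!(k-1)..max (tau!(k-1)) (min x (tau!k))} p / Ip k"
      proof -
        have "beta k * Bstar H alpha M 1 tau k x = (beta k * M) * integral {tau!(k-1)..max (tau!(k-1)) (min x (tau!k))} p"
          unfolding B by (simp only: mult.assoc)
        then show ?thesis unfolding bM by simp
      qed
      consider "k < i" | "k = i" | "k > i" by linarith
      then show ?thesis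
      proof cases
        case 1
        have "tau ! k \<le> tau ! (i - 1)" using 1 i by (intro Tmono) auto
        then have "max (tau!(k-1)) (min x (tau!k)) = tau ! k" using i Tcell[OF k1] by auto
        then show ?thesis using eq 1 CI1[OF k1] by (simp add: Ip_def)
      next
        case 2
        have "max (tau!(k-1)) (min x (tau!k)) = x" using i 2 by auto
        then show ?thesis using eq 2 by (simp add: lam_def c_def)
      next
        case 3
        have "tau ! i \<le> tau ! (k - 1)" using 3 k1 by (intro Tmono) auto
        then have "max (tau!(k-1)) (min x (tau!k)) = tau ! (k - 1)" using i Tcell[OF k1] by auto
        then show ?thesis using eq 3 by simp
      qed
    qed
    have set: "{0..L} = insert 0 (insert L {1..<L})" using L2 by auto
    have s0: "fLX x = beta 0 * Bstar H alpha M 1 tau 0 x + (beta L * Bstar H alpha M 1 tau L x +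
                   (\<Sum>k\<in>{1..<L}. beta k * Bstar H alpha M 1 tau k x))"
    proof -
      have "fLX x = (\<Sum>k\<in>{0..L}. beta k * Bstar H alpha M 1 tau k x)" by (simp add: fLX_def L_def)
      also have "\<dots> = beta 0 * Bstar H alpha M 1 tau 0 x + (beta L * Bstar H alpha M 1 tau L x +
                   (\<Sum>k\<in>{1..<L}. beta k * Bstar H alpha M 1 tau k x))"
        unfolding set using L2 by (simp add: sum.insert)
      finally show ?thesis .
    qed
    have s1: "beta 0 * Bstar H alpha M 1 tau 0 x = f0 a" by (simp add: beta_def Bstar_def)
    have s2: "beta L * Bstar H alpha M 1 tau L x = 0" using L2 by (simp add: beta_def)
    have s3: "(\<Sum>k\<in>{1..<L}. beta k * Bstar H alpha M 1 tau k x) =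
               (\<Sum>k\<in>{1..<L}. if k < i then Dl k else if k = i then Dl i * lam else 0)"
      by (rule sum.cong) (use trm in auto)
    have s4: "(\<Sum>k\<in>{1..<L}. if k < i then Dl k else if k = i then Dl i * lam else 0) = (\<Sum>k\<in>{1..<i}. Dl k) + Dl i * lam"
      by (rule sum_split3[OF i(1,2)])
    have s5: "(\<Sum>k\<in>{1..<i}. Dl k) = f0 c - f0 a"
      using tele[OF i(1), of "\<lambda>k. f0 (tau ! k)"] T0 by (simp add: Dl_def c_def)
    have "fLX x = f0 a + (0 + ((f0 c - f0 a) + Dl i * lam))"
      unfolding s0 s1 s2 s3 s4 s5 ..
    then have fx: "fLX x = f0 c + lam * (f0 d - f0 c)" by (simp add: Dl_def c_def d_def algebra_simps)
    have cd: "c \<in> {a..b}" "d \<in> {a..b}" "c \<le> x" "x \<le> d" "d - c < \<delta>"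
      using Tab[of "i - 1"] Tab[of i] i Tlen[OF i(1,2)] by (auto simp: c_def d_def)
    have e1: "\<bar>f0 x - f0 c\<bar> < \<epsilon>/2" using \<delta>(2)[of c x] cd x by (simp add: dist_real_def)
    have e2: "\<bar>f0 x - f0 d\<bar> < \<epsilon>/2" using \<delta>(2)[of d x] cd x by (simp add: dist_real_def abs_minus_commute)
    have "f0 x - fLX x = (1 - lam) * (f0 x - f0 c) + lam * (f0 x - f0 d)"
      using fx by (simp add: algebra_simps)
    also have "\<bar>\<dots>\<bar> \<le> (1 - lam) * \<bar>f0 x - f0 c\<bar> + lam * \<bar>f0 x - f0 d\<bar>"
    proof -
      have "\<bar>(1 - lam) * (f0 x - f0 c) + lam * (f0 x - f0 d)\<bar> \<le> \<bar>(1 - lam) * (f0 x - f0 c)\<bar> + \<bar>lam * (f0 x - f0 d)\<bar>"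
        by (rule abs_triangle_ineq)
      also have "\<dots> = (1 - lam) * \<bar>f0 x - f0 c\<bar> + lam * \<bar>f0 x - f0 d\<bar>"
        using lam by (simp add: abs_mult)
      finally show ?thesis .
    qed
    also have "\<dots> \<le> (1 - lam) * (\<epsilon>/2) + lam * (\<epsilon>/2)"
      using lam e1 e2 by (intro add_mono mult_left_mono) auto
    also have "\<dots> = \<epsilon>/2" by (simp add: field_simps)
    finally show ?thesis .
  qed
  have "(SUP x\<in>{a..b}. \<bar>f0 x - fLX x\<bar>) \<le> \<epsilon>/2"
    using ab bound by (intro cSUP_least) auto
  then have "(SUP x\<in>{a..b}. \<bar>f0 x - fLX x\<bar>) < \<epsilon>" using assms(4) by linarith
  then show ?thesis using lx by blast
qed


end
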